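(* Let $n$ and $p$ be positive integers with $p \leq \tfrac{2n}{3} - 1$. Let $\mathcal{G} = (\mathcal{V}, \mathcal{E})$ be a connected undirected graph with vertex set $\mathcal{V} = \{1, \ldots, N\}$, and define $U : \mathsf{St}(p,n)^N \to \mathbb{R}$ by $$U(S_1, \ldots, S_N) = \sum_{\{i,j\} \in \mathcal{E}} \bigl(p - \langle S_i, S_j \rangle\bigr) = \tfrac12 \sum_{\{i,j\}\in\mathcal{E}} \|S_i - S_j\|^2 .$$ Then every (local) minimizer $(S_1,\ldots,S_N)$ of $U$ on $\mathsf{St}(p,n)^N$ belongs to the consensus manifold $$\mathcal{C} = \{(S_i)_{i=1}^N \in \mathsf{St}(p,n)^N \mid S_i = S_j \text{ for all } \{i,j\} \in \mathcal{E}\}.$$ That is, every connected graph is $\mathsf{St}(p,n)$-synchronizing.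
   Context: The compact real Stiefel manifold is $\mathsf{St}(p,n) = \{S \in \mathbb{R}^{n\times p} \mid S^\top S = I_p\}$, viewed as an embedded submanifold of $\mathbb{R}^{n\times p}$ with the Euclidean (Frobenius) inner product $\langle X, Y\rangle = \operatorname{tr}(X^\top Y)$ and norm $\|X\| = \langle X,X\rangle^{1/2}$. A graph $\mathcal{G}$ is called $\mathsf{St}(p,n)$-synchronizing (for the potential $U$ above) if all minimizers of $U$ belong to the consensus manifold $\mathcal{C}$. *)

theory Defs
  imports "HOL-Analysis.Analysis"
begin

text \<open>Compact Stiefel manifold St(p,n): n x p real matrices S with S^T S = I_p.
  Rows are indexed by 'n, columns by 'p. The norm on real^'p^'n is the
  Frobenius norm and the inner product is tr(X^T Y).\<close>
definition stiefel :: "(real^'p^'n) set" where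
  "stiefel = {S. transpose S ** S = mat 1}"

text \<open>Undirected simple graph on vertex set {1..N}, edges stored as a symmetric,
  irreflexive relation (each undirected edge {i,j} appears as (i,j) and (j,i)).\<close>
definition undirected_graph :: "nat \<Rightarrow> (nat \<times> nat) set \<Rightarrow> bool" where
  "undirected_graph N E \<longleftrightarrow> E \<subseteq> {1..N} \<times> {1..N} \<and> sym E \<and> (\<forall>i. (i,i) \<notin> E)"

definition connected_graph :: "nat \<Rightarrow> (nat \<times> nat) set \<Rightarrow> bool" where
  "connected_graph N E \<longleftrightarrow> undirected_graph N E \<and> (\<forall>i\<in>{1..N}. \<forall>j\<in>{1..N}. (i,j) \<in> E\<^sup>*)"

text \<open>The potential U: sum over undirected edges {i,j} (each counted once, via i<j).\<close>
definition potential :: "(nat \<times> nat) set \<Rightarrow> (nat \<Rightarrow> real^'p^'n) \<Rightarrow> real" where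
  "potential E S = (\<Sum>(i,j)\<in>{(i,j). (i,j) \<in> E \<and> i < j}. real CARD('p) - S i \<bullet> S j)"

definition config_space :: "nat \<Rightarrow> (nat \<Rightarrow> real^'p^'n) set" where
  "config_space N = {S. \<forall>i\<in>{1..N}. S i \<in> stiefel}"

definition local_minimizer :: "nat \<Rightarrow> (nat \<times> nat) set \<Rightarrow> (nat \<Rightarrow> real^'p^'n) \<Rightarrow> bool" where
  "local_minimizer N E S \<longleftrightarrow> S \<in> config_space N \<and>
     (\<exists>\<epsilon>>0. \<forall>S'\<in>config_space N. (\<forall>i\<in>{1..N}. dist (S' i) (S i) < \<epsilon>)
        \<longrightarrow> potential E S \<le> potential E S')"

definition consensus :: "nat \<Rightarrow> (nat \<times> nat) set \<Rightarrow> (nat \<Rightarrow> real^'p^'n) set" where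
  "consensus N E = {S \<in> config_space N. \<forall>(i,j)\<in>E. S i = S j}"

end

theory Submission
  imports Defs
begin



lemma inner_mat: "(A::real^'m^'n) \<bullet> B = (\<Sum>i\<in>UNIV. \<Sum>j\<in>UNIV. A$i$j * B$i$j)"
  by (simp add: inner_vec_def inner_real_def)

lemma mm_entry: "((A::real^'m^'n) ** (B::real^'p^'m))$i$j = (\<Sum>k\<in>UNIV. A$i$k * B$k$j)"
  by (simp add: matrix_matrix_mult_def)

lemma tr_entry: "transpose (A::real^'m^'n) $i$j = A$j$i"
  by (simp add: transpose_def)

lemma inner_mm_left: "((A::real^'m^'n) ** (B::real^'p^'m)) \<bullet> C = B \<bullet> (transpose A ** C)"
proof -
  have "((A ** B) \<bullet> C) = (\<Sum>i\<in>UNIV. \<Sum>j\<in>UNIV. \<Sum>k\<in>UNIV. A$i$k * B$k$j * C$i$j)"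
    by (simp add: inner_mat mm_entry sum_distrib_right)
  also have "\<dots> = (\<Sum>i\<in>UNIV. \<Sum>k\<in>UNIV. \<Sum>j\<in>UNIV. A$i$k * B$k$j * C$i$j)"
    by (rule sum.cong[OF refl], rule sum.swap)
  also have "\<dots> = (\<Sum>k\<in>UNIV. \<Sum>i\<in>UNIV. \<Sum>j\<in>UNIV. A$i$k * B$k$j * C$i$j)"
    by (rule sum.swap)
  also have "\<dots> = (\<Sum>k\<in>UNIV. \<Sum>j\<in>UNIV. \<Sum>i\<in>UNIV. A$i$k * B$k$j * C$i$j)"
    by (rule sum.cong[OF refl], rule sum.swap)
  also have "\<dots> = B \<bullet> (transpose A ** C)"
    by (simp add: inner_mat mm_entry tr_entry sum_distrib_left mult_ac)
  finally show ?thesis .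
qed

lemma inner_mm_right: "((A::real^'m^'n) ** (B::real^'p^'m)) \<bullet> C = A \<bullet> (C ** transpose B)"
proof -
  have "((A ** B) \<bullet> C) = (\<Sum>i\<in>UNIV. \<Sum>j\<in>UNIV. \<Sum>k\<in>UNIV. A$i$k * B$k$j * C$i$j)"
    by (simp add: inner_mat mm_entry sum_distrib_right)
  also have "\<dots> = (\<Sum>i\<in>UNIV. \<Sum>k\<in>UNIV. \<Sum>j\<in>UNIV. A$i$k * B$k$j * C$i$j)"
    by (rule sum.cong[OF refl], rule sum.swap)
  also have "\<dots> = A \<bullet> (C ** transpose B)"
    by (simp add: inner_mat mm_entry tr_entry sum_distrib_left mult_ac)
  finally show ?thesis .
qed




lemma mm_add_right: "((A::real^'m^'n) + B) ** (C::real^'p^'m) = A ** C + B ** C"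
  by (simp add: vec_eq_iff mm_entry sum.distrib algebra_simps)
lemma mm_diff_right: "((A::real^'m^'n) - B) ** (C::real^'p^'m) = A ** C - B ** C"
  by (simp add: vec_eq_iff mm_entry sum_subtractf algebra_simps)
lemma mm_diff_left: "(A::real^'m^'n) ** ((B::real^'p^'m) - C) = A ** B - A ** C"
  by (simp add: vec_eq_iff mm_entry sum_subtractf algebra_simps)
lemma mm_add_left: "(A::real^'m^'n) ** ((B::real^'p^'m) + C) = A ** B + A ** C"
  by (simp add: vec_eq_iff mm_entry sum.distrib algebra_simps)
lemma mm_scale_left: "(c *\<^sub>R (A::real^'m^'n)) ** (B::real^'p^'m) = c *\<^sub>R (A ** B)"
  by (simp add: vec_eq_iff mm_entry sum_distrib_left algebra_simps)
lemma mm_scale_right: "(A::real^'m^'n) ** (c *\<^sub>R (B::real^'p^'m)) = c *\<^sub>R (A ** B)"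
  by (simp add: vec_eq_iff mm_entry sum_distrib_left algebra_simps)
lemma mm_neg_left: "(- (A::real^'m^'n)) ** (B::real^'p^'m) = - (A ** B)"
  by (simp add: vec_eq_iff mm_entry sum_negf algebra_simps)
lemma mm_neg_right: "(A::real^'m^'n) ** (- (B::real^'p^'m)) = - (A ** B)"
  by (simp add: vec_eq_iff mm_entry sum_negf algebra_simps)
lemma tr_add: "transpose ((A::real^'m^'n) + B) = transpose A + transpose B"
  by (simp add: vec_eq_iff tr_entry)
lemma tr_diff: "transpose ((A::real^'m^'n) - B) = transpose A - transpose B"
  by (simp add: vec_eq_iff tr_entry)
lemma tr_neg: "transpose (- (A::real^'m^'n)) = - transpose A"
  by (simp add: vec_eq_iff tr_entry)
lemma tr_scale: "transpose (c *\<^sub>R (A::real^'m^'n)) = c *\<^sub>R transpose A"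
  by (simp add: vec_eq_iff tr_entry)
lemma tr_mm: "transpose ((A::real^'m^'n) ** (B::real^'p^'m)) = transpose B ** transpose A"
  by (rule matrix_transpose_mul)

lemma linear_mm: "linear (\<lambda>Y::real^'p^'m. (A::real^'m^'n) ** Y)"
  by (rule linearI) (simp_all add: mm_add_left mm_scale_right)

lemma linear_mm_r: "linear (\<lambda>Y::real^'m^'n. Y ** (A::real^'p^'m))"
  by (rule linearI) (simp_all add: mm_add_right mm_scale_left)

lemma skew_inner0:
  assumes "transpose X = - (X::real^'n^'n)"
  shows "(Y::real^'p^'n) \<bullet> (X ** Y) = 0"
proof -
  have "Y \<bullet> (X ** Y) = (X ** Y) \<bullet> Y" by (simp add: inner_commute)
  also have "\<dots> = Y \<bullet> (transpose X ** Y)" by (rule inner_mm_left)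
  also have "\<dots> = - (Y \<bullet> (X ** Y))" by (simp add: assms mm_neg_left)
  finally show ?thesis by simp
qed

lemma cayley_solve:
  assumes "transpose X = - (X::real^'n^'n)"
  shows "\<exists>Y. (mat 1 - X) ** Y = (S::real^'p^'n)"
proof -
  let ?f = "\<lambda>Y::real^'p^'n. (mat 1 - X) ** Y"
  have lin: "linear ?f" by (rule linear_mm)
  have "inj ?f"
  proof (rule linear_injective_0[OF lin, THEN iffD2], intro allI impI)
    fix Y assume h: "(mat 1 - X) ** Y = 0"
    have "Y \<bullet> ((mat 1 - X) ** Y) = Y \<bullet> Y"
      by (simp add: mm_diff_right inner_diff_right skew_inner0[OF assms])
    with h show "Y = 0" by simp
  qed
  then have "surj ?f" using linear_injective_imp_surjective[OF lin] by blast
  then show ?thesis by (metis surjE)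
qed

lemma cayley_bound:
  assumes "transpose X = - (X::real^'n^'n)" "(mat 1 - X) ** Y = (S::real^'p^'n)"
  shows "norm Y \<le> norm S"
proof -
  have "Y \<bullet> S = Y \<bullet> Y"
    using assms(2)[symmetric] by (simp add: mm_diff_right inner_diff_right skew_inner0[OF assms(1)])
  then have "norm Y ^ 2 \<le> norm Y * norm S"
    by (metis Cauchy_Schwarz_ineq2 power2_norm_eq_inner abs_le_iff)
  then show ?thesis
    by (cases "norm Y = 0") (auto simp: power2_eq_square)
qed

lemma cayley_stiefel:
  assumes "transpose X = - (X::real^'n^'n)" "(mat 1 - X) ** Y = (S::real^'p^'n)" "S \<in> stiefel"
  shows "(mat 1 + X) ** Y \<in> stiefel"
proof -
  have c: "(mat 1 - X) ** (mat 1 + X) = (mat 1 + X) ** (mat 1 - X)"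
    by (simp add: mm_diff_right mm_add_left mm_add_right mm_diff_left)
  have t: "transpose (mat 1 + X) = mat 1 - X" by (simp add: tr_add assms(1))
  have t2: "transpose (mat 1 - X) = mat 1 + X" by (simp add: tr_diff assms(1))
  have "transpose ((mat 1 + X) ** Y) ** ((mat 1 + X) ** Y)
      = transpose Y ** (((mat 1 - X) ** (mat 1 + X)) ** Y)"
    by (simp add: tr_mm t matrix_mul_assoc)
  also have "\<dots> = (transpose Y ** (mat 1 + X)) ** S"
    by (simp add: c matrix_mul_assoc[symmetric] assms(2))
  also have "transpose Y ** (mat 1 + X) = transpose S"
    by (simp add: assms(2)[symmetric] tr_mm t2)
  finally show ?thesis using assms(3) by (simp add: stiefel_def)
qed

lemma curve:
  fixes S \<Delta> :: "real^'p^'n"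
  assumes S: "S \<in> stiefel" and tg: "transpose S ** \<Delta> + transpose \<Delta> ** S = (0::real^'p^'p)"
  shows "\<exists>E. (\<forall>t. S + t *\<^sub>R E t \<in> stiefel) \<and> (E \<longlongrightarrow> \<Delta>) (at_right 0)"
proof -
  define \<Omega> :: "real^'n^'n" where
    "\<Omega> = \<Delta> ** transpose S - S ** transpose \<Delta> - S ** (transpose S ** \<Delta>) ** transpose S"
  have tD: "transpose \<Delta> ** S = - (transpose S ** \<Delta>)" using tg by (simp add: eq_neg_iff_add_eq_0 add.commute)
  have SS: "transpose S ** S = mat 1" using S by (simp add: stiefel_def)
  have skew: "transpose \<Omega> = - \<Omega>"
    unfolding \<Omega>_def by (simp add: tr_diff tr_mm matrix_mul_assoc tD mm_neg_right mm_neg_left)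
  have OS: "\<Omega> ** S = \<Delta>"
    unfolding \<Omega>_def
    by (simp add: mm_diff_right matrix_mul_assoc[symmetric] SS tD mm_neg_right)
  define X where "X t = (t/2) *\<^sub>R \<Omega>" for t
  have skX: "transpose (X t) = - X t" for t by (simp add: X_def tr_scale skew)
  define Y where "Y t = (SOME Y. (mat 1 - X t) ** Y = S)" for t
  have Y: "(mat 1 - X t) ** Y t = S" for t
    unfolding Y_def using cayley_solve[OF skX] by (rule someI_ex)
  define E where "E t = \<Omega> ** Y t" for t
  have eq: "(mat 1 + X t) ** Y t = S + t *\<^sub>R E t" for t
  proof -
    have "(mat 1 + X t) ** Y t = (mat 1 - X t) ** Y t + 2 *\<^sub>R (X t ** Y t)"
      by (simp add: mm_add_right mm_diff_right scaleR_2)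
    then show ?thesis using Y[of t] by (simp add: E_def X_def mm_scale_left)
  qed
  have st: "S + t *\<^sub>R E t \<in> stiefel" for t
    using cayley_stiefel[OF skX Y S] eq by simp
  obtain B where B: "\<And>Z::real^'p^'n. norm (\<Omega> ** Z) \<le> B * norm Z"
    using linear_bounded[OF linear_mm[of \<Omega>]] by blast
  define K where "K = max B 0"
  have K0: "0 \<le> K" by (simp add: K_def)
  have K: "norm (\<Omega> ** Z) \<le> K * norm Z" for Z :: "real^'p^'n"
    using B[of Z] by (metis K_def max.cobounded1 mult_right_mono norm_ge_zero order.trans)
  have YS: "Y t - S = (t/2) *\<^sub>R (\<Omega> ** Y t)" for t
  proof -
    have "S = Y t - X t ** Y t" using Y[of t] by (simp add: mm_diff_right)
    then show ?thesis by (simp add: X_def mm_scale_left)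
  qed
  have "((\<lambda>t. Y t - S) \<longlongrightarrow> 0) (at_right 0)"
  proof (rule Lim_null_comparison)
    show "\<forall>\<^sub>F t in at_right 0. norm (Y t - S) \<le> \<bar>t\<bar> / 2 * (K * norm S)"
    proof (intro always_eventually allI)
      fix t :: real
      have "norm (Y t - S) = \<bar>t\<bar>/2 * norm (\<Omega> ** Y t)" by (simp add: YS)
      also have "\<dots> \<le> \<bar>t\<bar>/2 * (K * norm (Y t))" by (intro mult_left_mono K) auto
      also have "\<dots> \<le> \<bar>t\<bar>/2 * (K * norm S)"
        by (intro mult_left_mono cayley_bound[OF skX Y]) (auto simp: K0)
      finally show "norm (Y t - S) \<le> \<bar>t\<bar> / 2 * (K * norm S)" .
    qed
    show "((\<lambda>t. \<bar>t\<bar> / 2 * (K * norm S)) \<longlongrightarrow> 0) (at_right 0)"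
    proof -
      have "((\<lambda>t::real. \<bar>t\<bar> / 2 * (K * norm S)) \<longlongrightarrow> \<bar>0\<bar> / 2 * (K * norm S)) (at_right 0)"
        by (intro tendsto_mult_right tendsto_divide tendsto_rabs tendsto_ident_at tendsto_const) simp
      then show ?thesis by simp
    qed
  qed
  then have "(Y \<longlongrightarrow> S) (at_right 0)" by (rule LIM_zero_cancel)
  then have "(E \<longlongrightarrow> \<Omega> ** S) (at_right 0)"
    unfolding E_def using linear_conv_bounded_linear linear_mm bounded_linear.tendsto by blast
  with OS st show ?thesis by auto
qed




definition Ed :: "(nat \<times> nat) set \<Rightarrow> (nat \<times> nat) set" where
  "Ed E = {(i,j). (i,j) \<in> E \<and> i < j}"

definition Lf :: "(nat \<times> nat) set \<Rightarrow> (nat \<Rightarrow> real^'p^'n) \<Rightarrow> (nat \<Rightarrow> real^'p^'n) \<Rightarrow> real" where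
  "Lf E S D = (\<Sum>(i,j)\<in>Ed E. D i \<bullet> S j + S i \<bullet> D j)"

definition Pf :: "(nat \<times> nat) set \<Rightarrow> (nat \<Rightarrow> real^'p^'n) \<Rightarrow> real" where
  "Pf E D = (\<Sum>(i,j)\<in>Ed E. D i \<bullet> D j)"

definition Qf :: "(nat \<times> nat) set \<Rightarrow> (nat \<Rightarrow> real^'p^'n) \<Rightarrow> (nat \<Rightarrow> real^'p^'n) \<Rightarrow> real" where
  "Qf E S D = (\<Sum>(i,j)\<in>Ed E. D i \<bullet> (D i ** (transpose (S i) ** S j)) / 2
       + D j \<bullet> (D j ** (transpose (S j) ** S i)) / 2 - D i \<bullet> D j)"

definition tangent :: "real^'p^'n \<Rightarrow> real^'p^'n \<Rightarrow> bool" where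
  "tangent S D \<longleftrightarrow> transpose S ** D + transpose D ** S = 0"

lemma Ed_sub: "undirected_graph N E \<Longrightarrow> Ed E \<subseteq> {1..N} \<times> {1..N}"
  by (auto simp: Ed_def undirected_graph_def)

lemma Ed_finite: "undirected_graph N E \<Longrightarrow> finite (Ed E)"
  using Ed_sub finite_subset by blast

lemma pot_diff:
  "potential E (\<lambda>i. S i + D i) - potential E S = - Lf E S D - Pf E D"
  unfolding potential_def Lf_def Pf_def Ed_def
  by (simp add: sum_subtractf[symmetric] sum_negf[symmetric] sum.distrib[symmetric] split_def
      inner_add_left inner_add_right algebra_simps) (rule sum.cong, auto)

lemma Lf_scale: "Lf E S (\<lambda>i. c *\<^sub>R D i) = c * Lf E S D"
  by (simp add: Lf_def sum_distrib_left split_def algebra_simps)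

lemma Pf_scale: "Pf E (\<lambda>i. c *\<^sub>R D i) = c^2 * Pf E D"
  by (simp add: Pf_def sum_distrib_left split_def algebra_simps power2_eq_square)

lemma Qf_scale: "Qf E S (\<lambda>i. c *\<^sub>R D i) = c^2 * Qf E S D"
  by (simp add: Qf_def sum_distrib_left split_def algebra_simps power2_eq_square mm_scale_left)

lemma Lf_neg: "Lf E S (\<lambda>i. - D i) = - Lf E S D"
  by (simp add: Lf_def sum_negf[symmetric] split_def algebra_simps)

lemma local_min_curves:
  assumes G: "undirected_graph N E" and LM: "local_minimizer N E S"
    and tg: "\<forall>i\<in>{1..N}. tangent (S i) (\<Delta> i)"
  shows "\<exists>F. (\<forall>i\<in>{1..N}. (F i \<longlongrightarrow> \<Delta> i) (at_right 0)) \<and>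
     (\<forall>\<^sub>F t in at_right 0. 0 < t \<and> (\<lambda>i. S i + t *\<^sub>R F i t) \<in> config_space N \<and>
         potential E S \<le> potential E (\<lambda>i. S i + t *\<^sub>R F i t))"
proof -
  from LM have SC: "S \<in> config_space N" and
    "\<exists>\<epsilon>>0. \<forall>S'\<in>config_space N. (\<forall>i\<in>{1..N}. dist (S' i) (S i) < \<epsilon>)
        \<longrightarrow> potential E S \<le> potential E S'"
    unfolding local_minimizer_def by auto
  then obtain \<epsilon> where ep: "\<epsilon> > 0" and mn: "\<And>S'. S'\<in>config_space N \<Longrightarrow>
      (\<forall>i\<in>{1..N}. dist (S' i) (S i) < \<epsilon>) \<Longrightarrow> potential E S \<le> potential E S'" by blast
  have "\<forall>i\<in>{1..N}. \<exists>F. (\<forall>t. S i + t *\<^sub>R F t \<in> stiefel) \<and> (F \<longlongrightarrow> \<Delta> i) (at_right 0)"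
  proof
    fix i assume i: "i \<in> {1..N}"
    show "\<exists>F. (\<forall>t. S i + t *\<^sub>R F t \<in> stiefel) \<and> (F \<longlongrightarrow> \<Delta> i) (at_right 0)"
      using curve[of "S i" "\<Delta> i"] SC i tg by (auto simp: config_space_def tangent_def)
  qed
  then obtain F where F: "\<And>i. i\<in>{1..N} \<Longrightarrow> (\<forall>t. S i + t *\<^sub>R F i t \<in> stiefel) \<and> (F i \<longlongrightarrow> \<Delta> i) (at_right 0)"
    by metis
  have ev: "\<forall>\<^sub>F t in at_right 0. \<forall>i\<in>{1..N}. dist (S i + t *\<^sub>R F i t) (S i) < \<epsilon>"
  proof (rule eventually_ball_finite, simp, intro ballI)
    fix i assume i: "i \<in> {1..N}"
    have "((\<lambda>t. t *\<^sub>R F i t) \<longlongrightarrow> 0 *\<^sub>R \<Delta> i) (at_right 0)"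
      by (intro tendsto_intros) (auto simp: F[OF i] tendsto_ident_at)
    then have "((\<lambda>t. norm (t *\<^sub>R F i t)) \<longlongrightarrow> 0) (at_right 0)"
      using tendsto_norm_zero by fastforce
    then have "\<forall>\<^sub>F t in at_right 0. norm (t *\<^sub>R F i t) < \<epsilon>"
      using ep order_tendstoD(2) by fastforce
    then show "\<forall>\<^sub>F t in at_right 0. dist (S i + t *\<^sub>R F i t) (S i) < \<epsilon>"
      by (simp add: dist_norm)
  qed
  have "\<forall>\<^sub>F t in at_right 0. 0 < t \<and> (\<lambda>i. S i + t *\<^sub>R F i t) \<in> config_space N \<and>
         potential E S \<le> potential E (\<lambda>i. S i + t *\<^sub>R F i t)"
    using ev eventually_at_right_less[of 0]
  proof (eventually_elim)
    case (elim t)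
    have c: "(\<lambda>i. S i + t *\<^sub>R F i t) \<in> config_space N" using F by (auto simp: config_space_def)
    then show ?case using mn[OF c] elim by auto
  qed
  then show ?thesis using F by blast
qed




lemma Lf_tendsto:
  assumes G: "undirected_graph N E" and F: "\<forall>i\<in>{1..N}. (F i \<longlongrightarrow> \<Delta> i) (at_right (0::real))"
  shows "((\<lambda>t. Lf E S (\<lambda>i. F i t)) \<longlongrightarrow> Lf E S \<Delta>) (at_right 0)"
  unfolding Lf_def
proof (rule tendsto_sum)
  fix x assume x: "x \<in> Ed E"
  obtain i j where ij: "x = (i,j)" by force
  with x Ed_sub[OF G] have "i \<in> {1..N}" "j \<in> {1..N}" by auto
  then show "((\<lambda>t. case x of (i, j) \<Rightarrow> F i t \<bullet> S j + S i \<bullet> F j t) \<longlongrightarrow>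
          (case x of (i, j) \<Rightarrow> \<Delta> i \<bullet> S j + S i \<bullet> \<Delta> j)) (at_right 0)"
    using F ij by (auto intro!: tendsto_intros)
qed

lemma Pf_tendsto:
  assumes G: "undirected_graph N E" and F: "\<forall>i\<in>{1..N}. (F i \<longlongrightarrow> \<Delta> i) (at_right (0::real))"
  shows "((\<lambda>t. Pf E (\<lambda>i. F i t)) \<longlongrightarrow> Pf E \<Delta>) (at_right 0)"
  unfolding Pf_def
proof (rule tendsto_sum)
  fix x assume x: "x \<in> Ed E"
  obtain i j where ij: "x = (i,j)" by force
  with x Ed_sub[OF G] have "i \<in> {1..N}" "j \<in> {1..N}" by auto
  then show "((\<lambda>t. case x of (i, j) \<Rightarrow> F i t \<bullet> F j t) \<longlongrightarrow>
          (case x of (i, j) \<Rightarrow> \<Delta> i \<bullet> \<Delta> j)) (at_right 0)"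
    using F ij by (auto intro!: tendsto_intros)
qed

lemma mm_tendsto:
  assumes "(f \<longlongrightarrow> (A::real^'p^'n)) F"
  shows "((\<lambda>t. f t ** (C::real^'q^'p)) \<longlongrightarrow> A ** C) F"
  using linear_mm_r[of C] linear_conv_bounded_linear bounded_linear.tendsto assms by blast

lemma Qf_tendsto:
  assumes G: "undirected_graph N E" and F: "\<forall>i\<in>{1..N}. (F i \<longlongrightarrow> \<Delta> i) (at_right (0::real))"
  shows "((\<lambda>t. Qf E S (\<lambda>i. F i t)) \<longlongrightarrow> Qf E S \<Delta>) (at_right 0)"
  unfolding Qf_def
proof (rule tendsto_sum)
  fix x assume x: "x \<in> Ed E"
  obtain i j where ij: "x = (i,j)" by force
  with x Ed_sub[OF G] have "i \<in> {1..N}" "j \<in> {1..N}" by auto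
  then show "((\<lambda>t. case x of (i, j) \<Rightarrow> F i t \<bullet> (F i t ** (transpose (S i) ** S j)) / 2
       + F j t \<bullet> (F j t ** (transpose (S j) ** S i)) / 2 - F i t \<bullet> F j t) \<longlongrightarrow>
          (case x of (i, j) \<Rightarrow> \<Delta> i \<bullet> (\<Delta> i ** (transpose (S i) ** S j)) / 2
       + \<Delta> j \<bullet> (\<Delta> j ** (transpose (S j) ** S i)) / 2 - \<Delta> i \<bullet> \<Delta> j)) (at_right 0)"
    using F ij by (simp, intro tendsto_diff tendsto_add tendsto_divide tendsto_inner mm_tendsto tendsto_const) auto
qed

lemma first_order_le:
  assumes G: "undirected_graph N E" and LM: "local_minimizer N E S"
    and tg: "\<forall>i\<in>{1..N}. tangent (S i) (\<Delta> i)"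
  shows "Lf E S \<Delta> \<le> 0"
proof -
  obtain F where F: "\<forall>i\<in>{1..N}. (F i \<longlongrightarrow> \<Delta> i) (at_right 0)" and
    ev: "\<forall>\<^sub>F t in at_right 0. 0 < t \<and> (\<lambda>i. S i + t *\<^sub>R F i t) \<in> config_space N \<and>
         potential E S \<le> potential E (\<lambda>i. S i + t *\<^sub>R F i t)"
    using local_min_curves[OF G LM tg] by blast
  have "\<forall>\<^sub>F t in at_right 0. 0 \<le> - Lf E S (\<lambda>i. F i t) - t * Pf E (\<lambda>i. F i t)"
    using ev
  proof eventually_elim
    case (elim t)
    then have "0 \<le> potential E (\<lambda>i. S i + t *\<^sub>R F i t) - potential E S" by simp
    also have "\<dots> = t * (- Lf E S (\<lambda>i. F i t) - t * Pf E (\<lambda>i. F i t))"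
      by (simp add: pot_diff Lf_scale[of E S t "\<lambda>i. F i t"] Pf_scale[of E t "\<lambda>i. F i t"]
          power2_eq_square algebra_simps)
    finally show ?case using elim by (simp add: zero_le_mult_iff)
  qed
  moreover have "((\<lambda>t. - Lf E S (\<lambda>i. F i t) - t * Pf E (\<lambda>i. F i t)) \<longlongrightarrow> - Lf E S \<Delta> - 0 * Pf E \<Delta>) (at_right 0)"
    by (intro tendsto_intros Lf_tendsto[OF G F] Pf_tendsto[OF G F])
  ultimately have "0 \<le> - Lf E S \<Delta> - 0 * Pf E \<Delta>"
    by (intro tendsto_lowerbound) auto
  then show ?thesis by simp
qed

lemma first_order:
  assumes G: "undirected_graph N E" and LM: "local_minimizer N E S"
    and tg: "\<forall>i\<in>{1..N}. tangent (S i) (\<Delta> i)"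
  shows "Lf E S \<Delta> = 0"
proof -
  have "\<forall>i\<in>{1..N}. tangent (S i) (- \<Delta> i)"
  proof
    fix i assume "i \<in> {1..N}"
    then have "transpose (S i) ** \<Delta> i + transpose (\<Delta> i) ** S i = 0" using tg by (simp add: tangent_def)
    then have "- (transpose (S i) ** \<Delta> i + transpose (\<Delta> i) ** S i) = 0" by simp
    then show "tangent (S i) (- \<Delta> i)" unfolding tangent_def tr_neg mm_neg_left mm_neg_right
      by (simp add: algebra_simps)
  qed
  from first_order_le[OF G LM this] first_order_le[OF G LM tg] show ?thesis
    by (simp add: Lf_neg)
qed




lemma Lf_add: "Lf E S (\<lambda>i. A i + B i) = Lf E S A + Lf E S B"
  by (simp add: Lf_def sum.distrib[symmetric] split_def inner_add_left inner_add_right algebra_simps)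

lemma qterm: "((S::real^'p^'n) ** (transpose D ** D)) \<bullet> T = D \<bullet> (D ** (transpose S ** T))"
  by (simp add: inner_mm_left)

definition Rf :: "(nat \<times> nat) set \<Rightarrow> (nat \<Rightarrow> real^'p^'n) \<Rightarrow> (nat \<Rightarrow> real^'p^'n) \<Rightarrow> real" where
  "Rf E S D = (\<Sum>(i,j)\<in>Ed E. D i \<bullet> (D i ** (transpose (S i) ** S j)) + D j \<bullet> (D j ** (transpose (S j) ** S i)))"

lemma Lf_SM: "Lf E S (\<lambda>i. S i ** (transpose (D i) ** D i)) = Rf E S D"
  unfolding Lf_def Rf_def
  by (rule sum.cong) (auto simp: qterm inner_commute[of "S _"])

lemma Qf_alt: "Qf E S D = Rf E S D / 2 - Pf E D"
  unfolding Qf_def Rf_def Pf_def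
  by (simp add: sum_subtractf[symmetric] sum_divide_distrib split_def add_divide_distrib)

lemma tangent_T:
  assumes "(S::real^'p^'n) \<in> stiefel" "S + D \<in> stiefel"
  shows "tangent S (D + (1/2) *\<^sub>R (S ** (transpose D ** D)))"
proof -
  have SS: "transpose S ** S = mat 1" using assms(1) by (simp add: stiefel_def)
  have "transpose (S + D) ** (S + D) = mat 1" using assms(2) by (simp add: stiefel_def)
  then have h: "mat 1 + transpose S ** D + transpose D ** S + transpose D ** D = mat 1"
    by (simp add: tr_add mm_add_left mm_add_right SS algebra_simps)
  let ?M = "transpose D ** D"
  have tM: "transpose ?M = ?M" by (metis tr_mm transpose_transpose)
  have e1: "transpose S ** (S ** ?M) = ?M" by (simp add: matrix_mul_assoc SS)
  have e2: "transpose (S ** ?M) ** S = ?M"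
    by (simp only: tr_mm transpose_transpose matrix_mul_assoc[symmetric] SS matrix_mul_rid)
  have "transpose S ** (D + (1/2) *\<^sub>R (S ** ?M)) +
        transpose (D + (1/2) *\<^sub>R (S ** ?M)) ** S
      = transpose S ** D + transpose D ** S + ((1/2) *\<^sub>R ?M + (1/2) *\<^sub>R ?M)"
    by (simp only: mm_add_left mm_add_right tr_add tr_scale mm_scale_left mm_scale_right e1 e2)
      (simp add: algebra_simps)
  also have "(1/2) *\<^sub>R ?M + (1/2) *\<^sub>R ?M = ?M" by (simp add: scaleR_add_left[symmetric])
  also have "transpose S ** D + transpose D ** S + ?M = 0" using h by (simp add: algebra_simps)
  finally show ?thesis by (simp add: tangent_def)
qed


lemma second_order:
  assumes G: "undirected_graph N E" and LM: "local_minimizer N E S"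
    and tg: "\<forall>i\<in>{1..N}. tangent (S i) (\<Delta> i)"
  shows "0 \<le> Qf E S \<Delta>"
proof -
  obtain F where F: "\<forall>i\<in>{1..N}. (F i \<longlongrightarrow> \<Delta> i) (at_right 0)" and
    ev: "\<forall>\<^sub>F t in at_right 0. 0 < t \<and> (\<lambda>i. S i + t *\<^sub>R F i t) \<in> config_space N \<and>
         potential E S \<le> potential E (\<lambda>i. S i + t *\<^sub>R F i t)"
    using local_min_curves[OF G LM tg] by blast
  have SC: "S \<in> config_space N" using LM by (simp add: local_minimizer_def)
  have "\<forall>\<^sub>F t in at_right 0. 0 \<le> Qf E S (\<lambda>i. F i t)"
    using ev
  proof eventually_elim
    case (elim t)
    define D where "D i = t *\<^sub>R F i t" for i
    define T where "T i = D i + (1/2) *\<^sub>R (S i ** (transpose (D i) ** D i))" for i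
    have "\<forall>i\<in>{1..N}. tangent (S i) (T i)"
      using elim SC unfolding T_def D_def config_space_def by (auto intro: tangent_T)
    from first_order[OF G LM this] have "Lf E S T = 0" .
    then have L: "Lf E S D = - (1/2) * Rf E S D"
      unfolding T_def by (simp add: Lf_add Lf_scale Lf_SM)
    have "0 \<le> potential E (\<lambda>i. S i + D i) - potential E S" using elim by (simp add: D_def)
    also have "\<dots> = Qf E S D" by (simp add: pot_diff L Qf_alt)
    also have "\<dots> = t^2 * Qf E S (\<lambda>i. F i t)" unfolding D_def by (rule Qf_scale)
    finally show ?case using elim by (simp add: zero_le_mult_iff)
  qed
  moreover have "((\<lambda>t. Qf E S (\<lambda>i. F i t)) \<longlongrightarrow> Qf E S \<Delta>) (at_right 0)"
    by (rule Qf_tendsto[OF G F])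
  ultimately show ?thesis by (intro tendsto_lowerbound) auto
qed



definition Em :: "'n \<Rightarrow> 'p \<Rightarrow> real^'p^'n" where
  "Em a b = (\<chi> k l. if k = a then (if l = b then 1 else 0) else 0)"

lemma Em_entry: "Em a b $ k $ l = (if k = a then (if l = b then 1 else 0) else 0)"
  by (simp add: Em_def)

lemma dl: "(\<Sum>k::'a::finite\<in>UNIV. f k * (if k = a then c else 0)) = f a * (c::real)"
proof -
  have "(\<Sum>k\<in>UNIV. f k * (if k = a then c else 0)) = (\<Sum>k\<in>UNIV. if k = a then f a * c else 0)" by (rule sum.cong) auto
  then show ?thesis by simp
qed
lemma dr: "(\<Sum>k::'a::finite\<in>UNIV. (if k = a then c else 0) * f k) = (c::real) * f a"
proof -
  have "(\<Sum>k\<in>UNIV. (if k = a then c else 0) * f k) = (\<Sum>k\<in>UNIV. if k = a then c * f a else 0)" by (rule sum.cong) auto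
  then show ?thesis by simp
qed

lemma Em_entry2: "Em a b $ k $ l = (if k = a then (if l = b then 1 else 0) else 0)"
  "Em a b $ k $ l = (if l = b then (if k = a then 1 else 0) else 0)"
  by (auto simp add: Em_def)

lemma Em_r: "((X::real^'n^'q) ** Em a b) $ i $ l = (if l = b then X$i$a else 0)"
  by (simp add: mm_entry Em_entry2(1) dl)
lemma Em_l: "(Em a b ** (Y::real^'q^'p)) $ k $ j = (if k = a then Y$b$j else 0)"
  by (simp add: mm_entry Em_entry2(2) dr)
lemma EmT_l: "(transpose (Em a b) ** (Y::real^'q^'n)) $ l $ j = (if l = b then Y$a$j else 0)"
  by (simp add: mm_entry tr_entry Em_entry2(1) dr)
lemma EmT_r: "((X::real^'p^'q) ** transpose (Em a b)) $ i $ k = (if k = a then X$i$b else 0)"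
  by (simp add: mm_entry tr_entry Em_entry2(2) dl)

definition mtr :: "real^'n^'n \<Rightarrow> real" where "mtr M = (\<Sum>i\<in>UNIV. M$i$i)"

lemma E1: "(\<Sum>a\<in>UNIV. \<Sum>b\<in>UNIV. transpose (Em a b :: real^'p^'n) ** (M::real^'n^'n) ** Em a b) = mtr M *\<^sub>R mat 1"
proof -
  have "(\<Sum>a\<in>UNIV. \<Sum>b\<in>UNIV. (transpose (Em a b :: real^'p^'n) ** M ** Em a b) $ l $ l')
      = (if l = l' then mtr M else 0)" for l l'
    by (simp add: Em_r EmT_l mtr_def)
  then show ?thesis by (simp add: vec_eq_iff sum_component mat_def)
qed



lemma ifz_mult: "(if P then x else 0) * (y::real) = (if P then x*y else 0)" by simp
lemma mult_ifz: "(y::real) * (if P then x else 0) = (if P then y*x else 0)" by simp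
lemma E2: "(\<Sum>a\<in>UNIV. \<Sum>b\<in>UNIV. transpose (Em a b) ** (A::real^'p^'n) ** transpose (Em a b) ** (B::real^'p^'n)) = transpose A ** B"
proof -
  have "(\<Sum>a\<in>UNIV. \<Sum>b\<in>UNIV. (transpose (Em a b) ** A ** transpose (Em a b) ** B) $ l $ l')
      = (transpose A ** B) $ l $ l'" for l l'
    by (simp add: ifz_mult mult_ifz mm_entry[of _ B] EmT_r EmT_l dr tr_entry)
  then show ?thesis by (simp add: ifz_mult mult_ifz vec_eq_iff sum_component)
qed


lemma Em_row: "Em a b $ i = (if i = a then axis b 1 else 0)"
  by (simp add: Em_def axis_def vec_eq_iff)

lemma Em_inner: "Em a b \<bullet> (X::real^'p^'n) = X $ a $ b"
proof -
  have "Em a b \<bullet> X = (\<Sum>i\<in>UNIV. (if i = a then axis b 1 else 0) \<bullet> X $ i)"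
    by (simp add: inner_vec_def Em_row)
  also have "\<dots> = (\<Sum>i\<in>UNIV. if i = a then axis b 1 \<bullet> X $ i else 0)"
    by (rule sum.cong) auto
  also have "\<dots> = X $ a $ b" by (simp add: inner_axis' inner_real_def)
  finally show ?thesis .
qed

lemma E3: "(\<Sum>a\<in>UNIV. \<Sum>b\<in>UNIV. (Em a b :: real^'p^'n) ** transpose (Em a b)) = real CARD('p) *\<^sub>R mat 1"
proof -
  have "(\<Sum>a\<in>UNIV. \<Sum>b\<in>UNIV. ((Em a b :: real^'p^'n) ** transpose (Em a b)) $ l $ l')
      = (if l = l' then real CARD('p) else 0)" for l l'
  proof -
    have "((Em a b :: real^'p^'n) ** transpose (Em a b)) $ l $ l' = (if l = l' then (if l' = a then 1 else 0) else 0)" for a b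
      by (cases "l' = a") (auto simp: EmT_r Em_entry)
    then show ?thesis by (cases "l = l'") (simp_all add: mult_ifz)
  qed
  then show ?thesis by (simp add: vec_eq_iff sum_component mat_def)
qed

lemma E4: "(\<Sum>a\<in>UNIV. \<Sum>b\<in>UNIV. (Em a b :: real^'p^'n) \<bullet> ((M::real^'n^'n) ** Em a b)) = real CARD('p) * mtr M"
  by (simp add: Em_inner Em_r mtr_def sum_distrib_left)

lemma E5: "(\<Sum>a\<in>UNIV. \<Sum>b\<in>UNIV. (Em a b :: real^'p^'n) \<bullet> ((A::real^'p^'n) ** transpose (Em a b) ** (B::real^'p^'n))) = A \<bullet> B"
proof -
  have "(A ** transpose (Em a b) ** B) $ a $ b = A $ a $ b * B $ a $ b" for a b
    by (simp add: mm_entry[of _ B] EmT_r ifz_mult)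
  then show ?thesis by (simp add: Em_inner) (simp add: inner_mat)
qed

lemma E6: "(\<Sum>a\<in>UNIV. \<Sum>b\<in>UNIV. ((S::real^'p^'n) ** transpose (Em a b) ** S) \<bullet> ((T::real^'p^'n) ** transpose (Em a b) ** T)) = (S \<bullet> T)^2"
proof -
  have e: "(X ** transpose (Em a b) ** Y) $ i $ j = X$i$b * Y$a$j" for X Y :: "real^'p^'n" and a b i j
    by (simp add: mm_entry[of _ Y] EmT_r ifz_mult)
  have f: "(S ** transpose (Em a b) ** S) \<bullet> (T ** transpose (Em a b) ** T)
     = (\<Sum>i\<in>UNIV. S$i$b * T$i$b) * (\<Sum>j\<in>UNIV. S$a$j * T$a$j)" for a b
    unfolding inner_mat e sum_product by (intro sum.cong refl) (simp add: mult_ac)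
  have "(\<Sum>a\<in>UNIV. \<Sum>b\<in>UNIV. (S ** transpose (Em a b) ** S) \<bullet> (T ** transpose (Em a b) ** T))
     = (\<Sum>a\<in>UNIV. \<Sum>b\<in>UNIV. (\<Sum>i\<in>UNIV. S$i$b * T$i$b) * (\<Sum>j\<in>UNIV. S$a$j * T$a$j))"
    by (simp only: f)
  also have "\<dots> = (\<Sum>a\<in>UNIV. (\<Sum>b\<in>UNIV. (\<Sum>i\<in>UNIV. S$i$b * T$i$b)) * (\<Sum>j\<in>UNIV. S$a$j * T$a$j))"
    by (simp only: sum_distrib_right)
  also have "\<dots> = (\<Sum>b\<in>UNIV. (\<Sum>i\<in>UNIV. S$i$b * T$i$b)) * (\<Sum>a\<in>UNIV. (\<Sum>j\<in>UNIV. S$a$j * T$a$j))"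
    by (simp only: sum_distrib_left)
  also have "(\<Sum>b\<in>UNIV. (\<Sum>i\<in>UNIV. S$i$b * T$i$b)) = S \<bullet> T"
    unfolding inner_mat by (rule sum.swap)
  also have "(\<Sum>a\<in>UNIV. (\<Sum>j\<in>UNIV. S$a$j * T$a$j)) = S \<bullet> T"
    by (simp add: inner_mat)
  finally show ?thesis by (simp add: power2_eq_square)
qed



definition Proj :: "real^'p^'n \<Rightarrow> real^'p^'n \<Rightarrow> real^'p^'n" where
  "Proj S V = V - (1/2) *\<^sub>R (S ** (transpose S ** V + transpose V ** S))"

lemma Pi_exp: "Proj S V = V - (1/2) *\<^sub>R (S ** transpose S ** V) - (1/2) *\<^sub>R (S ** transpose V ** S)"
  unfolding Proj_def by (simp add: mm_add_left matrix_mul_assoc algebra_simps)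

lemma SSr: "S \<in> stiefel \<Longrightarrow> (X::real^'p^'q) ** transpose S ** S = X"
  by (simp add: stiefel_def matrix_mul_assoc[symmetric])

lemma SSl: "S \<in> stiefel \<Longrightarrow> transpose S ** S = mat 1"
  by (simp add: stiefel_def)

lemma Pi_tangent:
  assumes "S \<in> stiefel" shows "tangent S (Proj S V)"
proof -
  have "transpose S ** Proj S V + transpose (Proj S V) ** S
      = transpose S ** V + transpose V ** S - (1/2) *\<^sub>R (transpose S ** V + transpose V ** S)
         - (1/2) *\<^sub>R (transpose S ** V + transpose V ** S)"
    unfolding Pi_exp
    by (simp only: mm_diff_left mm_diff_right mm_add_left mm_add_right mm_scale_left mm_scale_right
        tr_diff tr_add tr_scale tr_mm transpose_transpose matrix_mul_assoc SSr[OF assms] SSl[OF assms]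
        matrix_mul_lid matrix_mul_rid) (simp add: algebra_simps)
  also have "\<dots> = 0" by (simp add: scaleR_diff_right[symmetric] algebra_simps scaleR_2[symmetric]
       scaleR_add_left[symmetric])
  finally show ?thesis by (simp add: tangent_def)
qed

lemma DtD:
  assumes S: "S \<in> stiefel"
  shows "transpose (Proj S V) ** Proj S V = transpose V ** V
     - (3/4) *\<^sub>R (transpose V ** S ** transpose S ** V)
     - (1/4) *\<^sub>R (transpose V ** S ** transpose V ** S)
     - (1/4) *\<^sub>R (transpose S ** V ** transpose S ** V)
     + (1/4) *\<^sub>R (transpose S ** V ** transpose V ** S)"
  unfolding Pi_exp
  by (simp only: mm_diff_left mm_diff_right mm_add_left mm_add_right mm_scale_left mm_scale_right
        tr_diff tr_add tr_scale tr_mm transpose_transpose matrix_mul_assoc SSr[OF S] SSl[OF S]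
        matrix_mul_lid matrix_mul_rid) (simp add: algebra_simps, simp add: scaleR_add_left[symmetric])


lemma linear_tr: "linear (transpose :: real^'p^'n \<Rightarrow> real^'n^'p)"
  by (rule linearI) (simp_all add: tr_add tr_scale)

lemma tr_sum: "transpose (sum f X) = (\<Sum>x\<in>X. transpose (f x :: real^'p^'n))"
  using linear_sum[OF linear_tr, of f X] by (simp add: o_def)

lemma mm_sum_l: "(A::real^'m^'n) ** sum f X = (\<Sum>x\<in>X. A ** (f x :: real^'p^'m))"
  using linear_sum[OF linear_mm[of A], of f X] by (simp add: o_def)

lemma mm_sum_r: "sum f X ** (A::real^'p^'m) = (\<Sum>x\<in>X. (f x :: real^'m^'n) ** A)"
  using linear_sum[OF linear_mm_r[of A], of f X] by (simp add: o_def)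

lemma tr_id: "mtr (mat 1 :: real^'n^'n) = real CARD('n)"
  by (simp add: mtr_def mat_def)

lemma tr_SSt: assumes "(S::real^'p^'n) \<in> stiefel" shows "mtr (S ** transpose S) = real CARD('p)"
proof -
  have "mtr (S ** transpose S) = (\<Sum>i\<in>UNIV. \<Sum>k\<in>UNIV. S$i$k * S$i$k)"
    by (simp add: mtr_def mm_entry tr_entry)
  also have "\<dots> = (\<Sum>k\<in>UNIV. \<Sum>i\<in>UNIV. S$i$k * S$i$k)" by (rule sum.swap)
  also have "\<dots> = (\<Sum>k\<in>UNIV. (transpose S ** S) $ k $ k)" by (simp add: mm_entry tr_entry)
  also have "\<dots> = real CARD('p)" using assms by (simp add: stiefel_def mat_def)
  finally show ?thesis .
qed

lemma F1: "(\<Sum>a\<in>UNIV. \<Sum>b\<in>UNIV. transpose (Em a b :: real^'p^'n) ** Em a b) = real CARD('n) *\<^sub>R mat 1"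
  using E1[where M="mat 1 :: real^'n^'n", where 'p='p] by (simp add: tr_id)

lemma F2: assumes "(S::real^'p^'n) \<in> stiefel"
  shows "(\<Sum>a\<in>UNIV. \<Sum>b\<in>UNIV. transpose (Em a b :: real^'p^'n) ** S ** transpose S ** Em a b) = real CARD('p) *\<^sub>R mat 1"
  using E1[where M="S ** transpose S", where 'p='p] by (simp add: tr_SSt[OF assms] matrix_mul_assoc)

lemma F3: assumes "(S::real^'p^'n) \<in> stiefel"
  shows "(\<Sum>a\<in>UNIV. \<Sum>b\<in>UNIV. transpose (Em a b) ** S ** transpose (Em a b) ** S) = mat 1"
  using E2[of S S] assms by (simp add: stiefel_def)

lemma F4: assumes "(S::real^'p^'n) \<in> stiefel"
  shows "(\<Sum>a\<in>UNIV. \<Sum>b\<in>UNIV. transpose S ** Em a b ** transpose S ** Em a b) = mat 1"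
proof -
  have "transpose (transpose (Em a b) ** S ** transpose (Em a b) ** S) = transpose S ** Em a b ** transpose S ** Em a b" for a b
    by (simp add: tr_mm matrix_mul_assoc)
  then have "(\<Sum>a\<in>UNIV. \<Sum>b\<in>UNIV. transpose S ** Em a b ** transpose S ** Em a b)
     = transpose (\<Sum>a\<in>UNIV. \<Sum>b\<in>UNIV. transpose (Em a b) ** S ** transpose (Em a b) ** S)"
    by (simp add: tr_sum)
  then show ?thesis by (simp add: F3[OF assms])
qed

lemma F5: assumes "(S::real^'p^'n) \<in> stiefel"
  shows "(\<Sum>a\<in>UNIV. \<Sum>b\<in>UNIV. transpose S ** (Em a b :: real^'p^'n) ** transpose (Em a b) ** S) = real CARD('p) *\<^sub>R mat 1"
proof -
  have "(\<Sum>a\<in>UNIV. \<Sum>b\<in>UNIV. transpose S ** (Em a b :: real^'p^'n) ** transpose (Em a b) ** S)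
     = transpose S ** (\<Sum>a\<in>UNIV. \<Sum>b\<in>UNIV. (Em a b :: real^'p^'n) ** transpose (Em a b)) ** S"
    by (simp add: mm_sum_l mm_sum_r matrix_mul_assoc)
  then show ?thesis using assms by (simp add: E3 mm_scale_left mm_scale_right stiefel_def)
qed

lemma coll5: "a *\<^sub>R X - b *\<^sub>R X - c *\<^sub>R X - d *\<^sub>R X + e *\<^sub>R X = (a - b - c - d + e) *\<^sub>R (X::'a::real_vector)"
  by (simp add: algebra_simps)

lemma SumDtD: assumes S: "(S::real^'p^'n) \<in> stiefel"
  shows "(\<Sum>a\<in>UNIV. \<Sum>b\<in>UNIV. transpose (Proj S (Em a b)) ** Proj S (Em a b))
      = (real CARD('n) - real CARD('p)/2 - 1/2) *\<^sub>R mat 1"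
proof -
  have "(\<Sum>a\<in>UNIV. \<Sum>b\<in>UNIV. transpose (Proj S (Em a b)) ** Proj S (Em a b))
     = (\<Sum>a\<in>UNIV. \<Sum>b\<in>UNIV. transpose (Em a b :: real^'p^'n) ** Em a b)
     - (3/4) *\<^sub>R (\<Sum>a\<in>UNIV. \<Sum>b\<in>UNIV. transpose (Em a b :: real^'p^'n) ** S ** transpose S ** Em a b)
     - (1/4) *\<^sub>R (\<Sum>a\<in>UNIV. \<Sum>b\<in>UNIV. transpose (Em a b :: real^'p^'n) ** S ** transpose (Em a b) ** S)
     - (1/4) *\<^sub>R (\<Sum>a\<in>UNIV. \<Sum>b\<in>UNIV. transpose S ** (Em a b :: real^'p^'n) ** transpose S ** Em a b)
     + (1/4) *\<^sub>R (\<Sum>a\<in>UNIV. \<Sum>b\<in>UNIV. transpose S ** (Em a b :: real^'p^'n) ** transpose (Em a b) ** S)"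
    by (simp only: DtD[OF S] sum.distrib sum_subtractf scaleR_right.sum[symmetric])
  also have "\<dots> = (real CARD('n) - real CARD('p)/2 - 1/2) *\<^sub>R mat 1"
    by (simp only: F1 F2[OF S] F3[OF S] F4[OF S] F5[OF S] scaleR_scaleR coll5 scaleR_one)
       (rule arg_cong[where f="\<lambda>c. c *\<^sub>R mat 1"], simp)
  finally show ?thesis .
qed




lemma inner_tr: "transpose (A::real^'p^'n) \<bullet> transpose B = A \<bullet> B"
  by (simp add: inner_mat tr_entry) (rule sum.swap)

lemma trmm: "mtr ((X::real^'m^'n) ** (Y::real^'n^'m)) = X \<bullet> transpose Y"
  by (simp add: mtr_def mm_entry inner_mat tr_entry)

lemma inner_self_St: "(S::real^'p^'n) \<in> stiefel \<Longrightarrow> S \<bullet> S = real CARD('p)"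
proof -
  assume S: "S \<in> stiefel"
  have "S \<bullet> S = transpose S \<bullet> transpose S" by (simp add: inner_tr)
  also have "\<dots> = mtr (transpose S ** S)" by (simp add: trmm)
  also have "\<dots> = real CARD('p)" using S by (simp add: stiefel_def tr_id)
  finally show ?thesis .
qed

lemma gl: "((A::real^'m^'n) ** transpose A ** (V::real^'p^'n)) \<bullet> Y = V \<bullet> (A ** transpose A ** Y)"
  using inner_mm_left[of "A ** transpose A" V Y] by (simp add: tr_mm)

lemma G6val: "((S::real^'p^'n) ** transpose S ** T) \<bullet> T = (transpose S ** T) \<bullet> (transpose S ** T)"
  using inner_mm_left[of S "transpose S ** T" T] by (simp add: matrix_mul_assoc)

lemma G8val: "((T::real^'p^'n) ** transpose T ** S) \<bullet> S = (transpose S ** T) \<bullet> (transpose S ** T)"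
proof -
  have "transpose T ** S = transpose (transpose S ** T)" by (simp add: tr_mm)
  then show ?thesis using G6val[of T S] inner_tr by metis
qed

lemma DG:
  fixes S T V :: "real^'p^'n"
  shows "Proj S V \<bullet> Proj T V = V \<bullet> V - (1/2) * (V \<bullet> (T ** transpose T ** V)) - (1/2) * (V \<bullet> (T ** transpose V ** T))
     - (1/2) * (V \<bullet> (S ** transpose S ** V)) + (1/4) * (V \<bullet> (S ** transpose S ** T ** transpose T ** V))
     + (1/4) * (V \<bullet> (S ** transpose S ** T ** transpose V ** T))
     - (1/2) * (V \<bullet> (S ** transpose V ** S)) + (1/4) * (V \<bullet> (T ** transpose T ** S ** transpose V ** S))
     + (1/4) * ((S ** transpose V ** S) \<bullet> (T ** transpose V ** T))"
proof -
  have h4: "(S ** transpose S ** V) \<bullet> V = V \<bullet> (S ** transpose S ** V)" by (rule inner_commute)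
  have h5: "(S ** transpose S ** V) \<bullet> (T ** transpose T ** V) = V \<bullet> (S ** transpose S ** T ** transpose T ** V)"
    by (simp add: gl matrix_mul_assoc)
  have h6: "(S ** transpose S ** V) \<bullet> (T ** transpose V ** T) = V \<bullet> (S ** transpose S ** T ** transpose V ** T)"
    by (simp add: gl matrix_mul_assoc)
  have h7: "(S ** transpose V ** S) \<bullet> V = V \<bullet> (S ** transpose V ** S)" by (rule inner_commute)
  have h8: "(S ** transpose V ** S) \<bullet> (T ** transpose T ** V) = V \<bullet> (T ** transpose T ** S ** transpose V ** S)"
    by (subst inner_commute) (simp add: gl matrix_mul_assoc)
  show ?thesis
    unfolding Pi_exp
    by (simp only: inner_diff_left inner_diff_right inner_scaleR_left inner_scaleR_right h4 h5 h6 h7 h8)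
      (simp add: algebra_simps)
qed


lemma SumDG:
  fixes S T :: "real^'p^'n"
  assumes S: "S \<in> stiefel" and T: "T \<in> stiefel"
  defines "x \<equiv> (transpose S ** T) \<bullet> (transpose S ** T)"
  shows "(\<Sum>a\<in>UNIV. \<Sum>b\<in>UNIV. Proj S (Em a b) \<bullet> Proj T (Em a b))
     = real CARD('p) * real CARD('n) - real CARD('p)^2 - real CARD('p)
       + ((real CARD('p) + 2) * x + (S \<bullet> T)^2) / 4"
proof -
  let ?p = "real CARD('p)" and ?n = "real CARD('n)"
  have g1: "(\<Sum>a\<in>UNIV. \<Sum>b\<in>UNIV. (Em a b :: real^'p^'n) \<bullet> Em a b) = ?p * ?n"
    using E4[where M="mat 1::real^'n^'n", where 'p='p] by (simp add: tr_id)
  have g2: "(\<Sum>a\<in>UNIV. \<Sum>b\<in>UNIV. (Em a b :: real^'p^'n) \<bullet> (T ** transpose T ** Em a b)) = ?p * ?p"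
    using E4[where M="T ** transpose T", where 'p='p] by (simp add: tr_SSt[OF T])
  have g2': "(\<Sum>a\<in>UNIV. \<Sum>b\<in>UNIV. (Em a b :: real^'p^'n) \<bullet> (S ** transpose S ** Em a b)) = ?p * ?p"
    using E4[where M="S ** transpose S", where 'p='p] by (simp add: tr_SSt[OF S])
  have g3: "(\<Sum>a\<in>UNIV. \<Sum>b\<in>UNIV. (Em a b :: real^'p^'n) \<bullet> (T ** transpose (Em a b) ** T)) = ?p"
    using E5[of T T] by (simp add: inner_self_St[OF T])
  have g3': "(\<Sum>a\<in>UNIV. \<Sum>b\<in>UNIV. (Em a b :: real^'p^'n) \<bullet> (S ** transpose (Em a b) ** S)) = ?p"
    using E5[of S S] by (simp add: inner_self_St[OF S])
  have g5: "(\<Sum>a\<in>UNIV. \<Sum>b\<in>UNIV. (Em a b :: real^'p^'n) \<bullet> (S ** transpose S ** T ** transpose T ** Em a b)) = ?p * x"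
    using E4[where M="S ** transpose S ** T ** transpose T", where 'p='p]
    by (simp add: trmm G6val x_def)
  have g6: "(\<Sum>a\<in>UNIV. \<Sum>b\<in>UNIV. (Em a b :: real^'p^'n) \<bullet> (S ** transpose S ** T ** transpose (Em a b) ** T)) = x"
    using E5[of "S ** transpose S ** T" T] by (simp add: G6val x_def)
  have g8: "(\<Sum>a\<in>UNIV. \<Sum>b\<in>UNIV. (Em a b :: real^'p^'n) \<bullet> (T ** transpose T ** S ** transpose (Em a b) ** S)) = x"
    using E5[of "T ** transpose T ** S" S] by (simp add: G8val x_def)
  have g9: "(\<Sum>a\<in>UNIV. \<Sum>b\<in>UNIV. (S ** transpose (Em a b :: real^'p^'n) ** S) \<bullet> (T ** transpose (Em a b) ** T)) = (S \<bullet> T)^2"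
    by (rule E6)
  show ?thesis
    by (simp only: DG sum.distrib sum_subtractf sum_distrib_left[symmetric] g1 g2 g2' g3 g3' g5 g6 g8 g9)
      (simp add: algebra_simps power2_eq_square)
qed




definition gval :: "real^'p^'n \<Rightarrow> real^'p^'n \<Rightarrow> real" where
  "gval S T = (real CARD('n) - real CARD('p)/2 - 1/2) * (S \<bullet> T)
     - (real CARD('p) * real CARD('n) - real CARD('p)^2 - real CARD('p)
       + ((real CARD('p) + 2) * ((transpose S ** T) \<bullet> (transpose S ** T)) + (S \<bullet> T)^2) / 4)"

lemma DDC: "(D::real^'p^'n) \<bullet> (D ** C) = (transpose D ** D) \<bullet> C"
  by (simp add: inner_mm_left)

lemma mat1_inner: "(mat 1 :: real^'n^'n) \<bullet> C = mtr C"
  by (simp add: inner_mat mat_def mtr_def ifz_mult)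

lemma tr_StT: "mtr (transpose (S::real^'p^'n) ** T) = S \<bullet> T"
  by (simp add: trmm inner_tr)

lemma sum_DDC:
  assumes S: "(S::real^'p^'n) \<in> stiefel"
  shows "(\<Sum>a\<in>UNIV. \<Sum>b\<in>UNIV. Proj S (Em a b) \<bullet> (Proj S (Em a b) ** (transpose S ** T)))
    = (real CARD('n) - real CARD('p)/2 - 1/2) * (S \<bullet> T)"
proof -
  have "(\<Sum>a\<in>UNIV. \<Sum>b\<in>UNIV. Proj S (Em a b) \<bullet> (Proj S (Em a b) ** (transpose S ** T)))
     = (\<Sum>a\<in>UNIV. \<Sum>b\<in>UNIV. transpose (Proj S (Em a b)) ** Proj S (Em a b)) \<bullet> (transpose S ** T)"
    by (simp only: DDC inner_sum_left)
  also have "\<dots> = (real CARD('n) - real CARD('p)/2 - 1/2) * (S \<bullet> T)"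
    by (simp only: SumDtD[OF S] inner_scaleR_left mat1_inner tr_StT)
  finally show ?thesis .
qed

lemma edge_sum:
  assumes S: "(S::real^'p^'n) \<in> stiefel" and T: "T \<in> stiefel"
  shows "(\<Sum>a\<in>UNIV. \<Sum>b\<in>UNIV. Proj S (Em a b) \<bullet> (Proj S (Em a b) ** (transpose S ** T)) / 2
      + Proj T (Em a b) \<bullet> (Proj T (Em a b) ** (transpose T ** S)) / 2 - Proj S (Em a b) \<bullet> Proj T (Em a b))
    = gval S T"
proof -
  have "(\<Sum>a\<in>UNIV. \<Sum>b\<in>UNIV. Proj S (Em a b) \<bullet> (Proj S (Em a b) ** (transpose S ** T)) / 2
      + Proj T (Em a b) \<bullet> (Proj T (Em a b) ** (transpose T ** S)) / 2 - Proj S (Em a b) \<bullet> Proj T (Em a b))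
     = (\<Sum>a\<in>UNIV. \<Sum>b\<in>UNIV. Proj S (Em a b) \<bullet> (Proj S (Em a b) ** (transpose S ** T))) / 2
      + (\<Sum>a\<in>UNIV. \<Sum>b\<in>UNIV. Proj T (Em a b) \<bullet> (Proj T (Em a b) ** (transpose T ** S))) / 2
      - (\<Sum>a\<in>UNIV. \<Sum>b\<in>UNIV. Proj S (Em a b) \<bullet> Proj T (Em a b))"
    by (simp only: sum.distrib sum_subtractf sum_divide_distrib)
  also have "\<dots> = gval S T"
    by (simp only: sum_DDC[OF S] sum_DDC[OF T] SumDG[OF S T] gval_def inner_commute[of T S])
  finally show ?thesis .
qed

lemma ineq:
  fixes n p t x :: real
  assumes p1: "p \<ge> 1" and pn: "p \<le> 2 * n / 3 - 1" and tp: "t \<le> p" and px: "t^2 \<le> p * x"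
  shows "4 * p * ((n - p/2 - 1/2) * t - (p * n - p^2 - p + ((p + 2) * x + t^2) / 4))
     \<le> - 2 * (p + 1) * (p - t)^2"
proof -
  have a: "0 \<le> p * (p - t) * (2 * n - 3 * p - 3)" using p1 tp pn by (intro mult_nonneg_nonneg) auto
  have b: "(p + 2) * t^2 \<le> (p + 2) * (p * x)" using px p1 by (intro mult_left_mono) auto
  have e: "4 * p * ((n - p/2 - 1/2) * t - (p * n - p^2 - p + ((p + 2) * x + t^2) / 4)) + 2 * (p + 1) * (p - t)^2
     = - 2 * (p * (p - t) * (2 * n - 3 * p - 3)) - ((p + 2) * (p * x) - (p + 2) * t^2)"
    by (simp add: algebra_simps power2_eq_square)
  from a b e show ?thesis by linarith
qed




lemma trace_sq:
  fixes C :: "real^'p^'p"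
  shows "(mtr C)^2 \<le> real CARD('p) * (C \<bullet> C)"
proof -
  have cs: "(\<Sum>i\<in>UNIV. C$i$i * 1)^2 \<le> (\<Sum>i\<in>UNIV. (C$i$i)^2) * (\<Sum>i\<in>(UNIV::'p set). 1^2)"
    by (rule Cauchy_Schwarz_ineq_sum)
  have "(\<Sum>i\<in>UNIV. (C$i$i)^2) \<le> (\<Sum>i\<in>UNIV. \<Sum>j\<in>UNIV. C$i$j * C$i$j)"
  proof (rule sum_mono)
    fix i
    have "(C$i$i)^2 = (\<lambda>j. C$i$j * C$i$j) i" by (simp add: power2_eq_square)
    also have "\<dots> \<le> (\<Sum>j\<in>UNIV. C$i$j * C$i$j)"
      by (rule member_le_sum) auto
    finally show "(C$i$i)^2 \<le> (\<Sum>j\<in>UNIV. C$i$j * C$i$j)" .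
  qed
  then have "(\<Sum>i\<in>UNIV. (C$i$i)^2) \<le> C \<bullet> C" by (simp add: inner_mat)
  with cs show ?thesis by (simp add: mtr_def mult.commute mult_left_mono order_trans)
qed

lemma gval_prop:
  fixes S T :: "real^'p^'n"
  assumes S: "S \<in> stiefel" and T: "T \<in> stiefel"
    and pn: "real CARD('p) \<le> 2 * real CARD('n) / 3 - 1"
  shows "gval S T \<le> 0 \<and> (gval S T = 0 \<longrightarrow> S = T)"
proof -
  let ?p = "real CARD('p)" and ?n = "real CARD('n)" and ?t = "S \<bullet> T"
    and ?x = "(transpose S ** T) \<bullet> (transpose S ** T)"
  have p1: "?p \<ge> 1" by simp
  have nS: "norm S = sqrt ?p" using inner_self_St[OF S] by (simp add: norm_eq_sqrt_inner)
  have nT: "norm T = sqrt ?p" using inner_self_St[OF T] by (simp add: norm_eq_sqrt_inner)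
  have tp: "?t \<le> ?p" using norm_cauchy_schwarz[of S T] nS nT by simp
  have px: "?t^2 \<le> ?p * ?x" using trace_sq[of "transpose S ** T"] by (simp add: tr_StT)
  have I: "4 * ?p * gval S T \<le> - 2 * (?p + 1) * (?p - ?t)^2"
    using ineq[OF p1 pn tp px] unfolding gval_def by simp
  have z: "- 2 * (?p + 1) * (?p - ?t)^2 \<le> 0"
  proof -
    have "0 \<le> 2 * (?p + 1) * (?p - ?t)^2" by simp
    then show ?thesis by linarith
  qed
  have le: "gval S T \<le> 0"
  proof -
    have "4 * ?p * gval S T \<le> 0" using I z by linarith
    then show ?thesis by (simp add: mult_le_0_iff)
  qed
  moreover have "gval S T = 0 \<longrightarrow> S = T"
  proof
    assume "gval S T = 0"
    with I have "0 \<le> - 2 * (?p + 1) * (?p - ?t)^2" by simp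
    moreover have "0 \<le> 2 * (?p + 1) * (?p - ?t)^2" by simp
    ultimately have "2 * (?p + 1) * (?p - ?t)^2 = 0" by linarith
    then have "(?p - ?t)^2 = 0" by simp
    then have tt: "?t = ?p" by simp
    have "(S - T) \<bullet> (S - T) = S \<bullet> S - 2 * ?t + T \<bullet> T"
      by (simp add: inner_diff_left inner_diff_right inner_commute)
    also have "\<dots> = 0" using tt inner_self_St[OF S] inner_self_St[OF T] by simp
    finally show "S = T" by simp
  qed
  ultimately show ?thesis by blast
qed




theorem theorem1:
  fixes N :: nat and E :: "(nat \<times> nat) set" and S :: "nat \<Rightarrow> real^'p^'n"
  assumes "real CARD('p) \<le> 2 * real CARD('n) / 3 - 1"
    and "connected_graph N E"
    and "local_minimizer N E S"
  shows "S \<in> consensus N E"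
proof -
  note pn = assms(1)
  have G: "undirected_graph N E" using assms(2) by (simp add: connected_graph_def)
  note LM = assms(3)
  have SC: "S \<in> config_space N" using LM by (simp add: local_minimizer_def)
  then have St: "\<And>i. i \<in> {1..N} \<Longrightarrow> S i \<in> stiefel" by (simp add: config_space_def)
  have fin: "finite (Ed E)" by (rule Ed_finite[OF G])
  define f where "f x = (case x of (i, j) \<Rightarrow> gval (S i) (S j))" for x
  have Q: "0 \<le> Qf E S (\<lambda>i. Proj (S i) (Em a b))" for a b
  proof (rule second_order[OF G LM], intro ballI)
    fix i :: nat assume "i \<in> {1..N}"
    then show "tangent (S i) (Proj (S i) (Em a b))" by (rule Pi_tangent[OF St])
  qed
  have "0 \<le> (\<Sum>a\<in>UNIV. \<Sum>b\<in>UNIV. Qf E S (\<lambda>i. Proj (S i) (Em a b)))"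
    by (intro sum_nonneg Q)
  also have "\<dots> = (\<Sum>x\<in>Ed E. \<Sum>a\<in>UNIV. \<Sum>b\<in>UNIV. (case x of (i,j) \<Rightarrow>
        Proj (S i) (Em a b) \<bullet> (Proj (S i) (Em a b) ** (transpose (S i) ** S j)) / 2
      + Proj (S j) (Em a b) \<bullet> (Proj (S j) (Em a b) ** (transpose (S j) ** S i)) / 2
      - Proj (S i) (Em a b) \<bullet> Proj (S j) (Em a b)))"
    unfolding Qf_def
    by (subst sum.swap, rule sum.cong[OF refl], subst sum.swap, rule refl)
  also have "\<dots> = (\<Sum>x\<in>Ed E. f x)"
  proof (rule sum.cong[OF refl])
    fix x assume x: "x \<in> Ed E"
    obtain i j where ij: "x = (i, j)" by force
    with x Ed_sub[OF G] have "i \<in> {1..N}" "j \<in> {1..N}" by auto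
    then show "(\<Sum>a\<in>UNIV. \<Sum>b\<in>UNIV. (case x of (i,j) \<Rightarrow>
        Proj (S i) (Em a b) \<bullet> (Proj (S i) (Em a b) ** (transpose (S i) ** S j)) / 2
      + Proj (S j) (Em a b) \<bullet> (Proj (S j) (Em a b) ** (transpose (S j) ** S i)) / 2
      - Proj (S i) (Em a b) \<bullet> Proj (S j) (Em a b))) = f x"
      using edge_sum[OF St St] ij by (simp add: f_def)
  qed
  finally have s0: "0 \<le> (\<Sum>x\<in>Ed E. f x)" .
  have fle: "\<forall>x\<in>Ed E. f x \<le> 0"
  proof
    fix x assume x: "x \<in> Ed E"
    obtain i j where ij: "x = (i, j)" by force
    with x Ed_sub[OF G] have "i \<in> {1..N}" "j \<in> {1..N}" by auto
    then show "f x \<le> 0" using gval_prop[OF St St pn] ij by (simp add: f_def)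
  qed
  have "(\<Sum>x\<in>Ed E. - f x) = 0"
  proof -
    have "(\<Sum>x\<in>Ed E. - f x) \<le> 0" using s0 by (simp add: sum_negf)
    moreover have "0 \<le> (\<Sum>x\<in>Ed E. - f x)" using fle by (intro sum_nonneg) auto
    ultimately show ?thesis by linarith
  qed
  then have f0: "\<forall>x\<in>Ed E. f x = 0"
    using sum_nonneg_eq_0_iff[OF fin, of "\<lambda>x. - f x"] fle by auto
  have eq: "S i = S j" if "(i, j) \<in> Ed E" for i j
  proof -
    from that Ed_sub[OF G] have "i \<in> {1..N}" "j \<in> {1..N}" by auto
    then show ?thesis using gval_prop[OF St St pn] f0 that by (auto simp: f_def)
  qed
  have "\<forall>(i,j)\<in>E. S i = S j"
  proof (clarify)
    fix i j assume ij: "(i, j) \<in> E"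
    have "i \<noteq> j" using G ij by (auto simp: undirected_graph_def)
    moreover have "(j, i) \<in> E" using G ij by (auto simp: undirected_graph_def sym_def)
    ultimately show "S i = S j"
    proof (cases "i < j")
      case True then show ?thesis using ij eq by (auto simp: Ed_def)
    next
      case False
      with \<open>i \<noteq> j\<close> have "j < i" by simp
      then have "S j = S i" using \<open>(j, i) \<in> E\<close> eq by (auto simp: Ed_def)
      then show ?thesis by simp
    qed
  qed
  with SC show ?thesis by (simp add: consensus_def)
qed


end
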